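(* Under Assumptions 1–4 below, the iterates of Algorithm 2Direction satisfy, for every $t\ge0$, with $s_t=\frac{\gamma_{t+1}}{\bar L+\Gamma_{t+1}\mu}$, $$\mathbb E_t\|w^{t+1}-u^{t+1}\|^2\le\Big(1-\frac\alpha2\Big)\|w^t-u^t\|^2+\frac4\alpha s_t^2\|k^t-\nabla f(z^t)\|^2+\frac{2\omega}{n}s_t^2\frac1n\sum_{i=1}^n\|\nabla f_i(z^t)-h_i^t\|^2+s_t^2\Big(\frac{4\omega L_{\max}}{n}+\frac{8L}{\alpha}\Big)D_f(z^t,y^{t+1}),$$ where $D_f(x,y)=f(x)-f(y)-\langle\nabla f(y),x-y\rangle$.
   Context: Setting: $f=\frac1n\sum_{i=1}^nf_i$, $f_i:\mathbb R^d\to\mathbb R$. Assumption 1: each $f_i$ is $L_i$-smooth, $L_{\max}=\max_iL_i$, and $\widehat L>0$ satisfies $\frac1n\sum_i\|\nabla f_i(x)-\nabla f_i(y)\|^2\le\widehat L^2\|x-y\|^2$ for all $x,y$. Assumption 2: $f$ is $L$-smooth. Assumption 3: each $f_i$ is convex and $f$ is $\mu$-strongly convex ($\mu\ge0$) with minimizer $x^*$. Assumption 4: the randomness of all compressors is drawn independently (of each other, of the coins $c^t$, and of the past). Compressor classes: $\mathbb U(\omega)$ ($\omega\ge0$) = stochastic maps $\mathcal C$ with $\mathbb E\mathcal C(x)=x$, $\mathbb E\|\mathcal C(x)-x\|^2\le\omega\|x\|^2$; $\mathbb B(\alpha)$ ($\alpha\in(0,1]$) = possibly stochastic maps with $\mathbb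 E\|\mathcal C(x)-x\|^2\le(1-\alpha)\|x\|^2$. Algorithm 2Direction: compressors $\mathcal C_i^{D,y},\mathcal C_i^{D,z}\in\mathbb U(\omega)$ (workers), $\mathcal C^P\in\mathbb B(\alpha)$ (server); parameters $\bar L>0$, $\mu\ge0$, $p\in(0,1]$, $\Gamma_0\ge1$, $\tau\in(0,1]$, $x^0,h_1^0,\dots,h_n^0,k^0,v^0\in\mathbb R^d$. Set $\beta=1/(\omega+1)$, $w^0=z^0=u^0=x^0$, $h^0=\frac1n\sum_ih_i^0$, $\theta_{\min}=\frac14\min\{1,\alpha/p,\tau/p,\beta/p\}$. For $t=0,1,\dots$: let $\bar\theta_{t+1}$ be the largest root of $p\bar L\Gamma_t\theta^2+p(\bar L+\Gamma_t\mu)\theta-(\bar L+\Gamma_t\mu)=0$, $\theta_{t+1}=\min\{\bar\theta_{t+1},\theta_{\min}\}$, $\gamma_{t+1}=p\theta_{t+1}\Gamma_t/(1-p\theta_{t+1})$, $\Gamma_{t+1}=\Gamma_t+\gamma_{t+1}$; $y^{t+1}=\theta_{t+1}w^t+(1-\theta_{t+1})z^t$; $m_i^{t,y}=\mathcal C_i^{D,y}(\nabla f_i(y^{t+1})-h_i^t)$; $g^{t+1}=h^t+\frac1n\sum_im_i^{t,y}$; $u^{t+1}=\arg\min_x\{\langle g^{t+1},x\rangle+\frac{\bar L+\Gamma_t\mu}{2\gamma_{t+1}}\|x-u^t\|^2+\frac\mu2\|x-y^{t+1}\|^2\}$; $q^{t+1}=\arg\min_x\{\langle k^t,x\rangle+\frac{\bar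 L+\Gamma_t\mu}{2\gamma_{t+1}}\|x-w^t\|^2+\frac\mu2\|x-y^{t+1}\|^2\}$; $w^{t+1}=q^{t+1}+\mathcal C^P(u^{t+1}-q^{t+1})$; $x^{t+1}=\theta_{t+1}u^{t+1}+(1-\theta_{t+1})z^t$; draw $c^t\sim\mathrm{Bernoulli}(p)$, and set $(k^{t+1},z^{t+1})=(v^t,x^{t+1})$ if $c^t=1$, $(k^{t+1},z^{t+1})=(k^t,z^t)$ if $c^t=0$; $m_i^{t,z}=\mathcal C_i^{D,z}(\nabla f_i(z^{t+1})-h_i^t)$; $h_i^{t+1}=h_i^t+\beta m_i^{t,z}$; $v^{t+1}=(1-\tau)v^t+\tau(h^t+\frac1n\sum_im_i^{t,z})$; $h^{t+1}=h^t+\frac\beta n\sum_im_i^{t,z}$. $\mathbb E_t$ denotes conditional expectation given the randomness of the first $t$ iterations. *)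

theory Defs
  imports "HOL-Analysis.Analysis" "HOL-Probability.Probability"
begin

text \<open>Compressors are modelled as Markov kernels: \<open>C x\<close> is the law of the
  random output \<open>\<C>(x)\<close>.  Measurability of the kernel is required so that
  expectations of composed random quantities are meaningful.\<close>

definition unbiased_compressor :: "real \<Rightarrow> ('a::euclidean_space \<Rightarrow> 'a measure) \<Rightarrow> bool" where
  "unbiased_compressor \<omega> C \<longleftrightarrow> \<omega> \<ge> 0 \<and> C \<in> borel \<rightarrow>\<^sub>M prob_algebra borel \<and>
     (\<forall>x. prob_space (C x) \<and> sets (C x) = sets borel \<and>
          integrable (C x) (\<lambda>y. y) \<and> (\<integral>y. y \<partial>C x) = x \<and>
          (\<integral>\<^sup>+y. ennreal ((norm (y - x))\<^sup>2) \<partial>C x) \<le> ennreal (\<omega> * (norm x)\<^sup>2))"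

definition contractive_compressor :: "real \<Rightarrow> ('a::euclidean_space \<Rightarrow> 'a measure) \<Rightarrow> bool" where
  "contractive_compressor \<alpha> C \<longleftrightarrow> 0 < \<alpha> \<and> \<alpha> \<le> 1 \<and> C \<in> borel \<rightarrow>\<^sub>M prob_algebra borel \<and>
     (\<forall>x. prob_space (C x) \<and> sets (C x) = sets borel \<and>
          (\<integral>\<^sup>+y. ennreal ((norm (y - x))\<^sup>2) \<partial>C x) \<le> ennreal ((1 - \<alpha>) * (norm x)\<^sup>2))"

definition strongly_convex :: "real \<Rightarrow> ('a::real_inner \<Rightarrow> real) \<Rightarrow> bool" where
  "strongly_convex \<mu> F \<longleftrightarrow> convex_on UNIV (\<lambda>x. F x - \<mu> / 2 * (norm x)\<^sup>2)"

definition bregman :: "('a::real_inner \<Rightarrow> real) \<Rightarrow> ('a \<Rightarrow> 'a) \<Rightarrow> 'a \<Rightarrow> 'a \<Rightarrow> real" where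
  "bregman F GF x y = F x - F y - GF y \<bullet> (x - y)"

definition theta_bar :: "real \<Rightarrow> real \<Rightarrow> real \<Rightarrow> real \<Rightarrow> real" where
  "theta_bar Lb \<mu> p \<Gamma> =
     Max {\<theta>. p * Lb * \<Gamma> * \<theta>\<^sup>2 + p * (Lb + \<Gamma> * \<mu>) * \<theta> - (Lb + \<Gamma> * \<mu>) = 0}"

definition theta_min :: "real \<Rightarrow> real \<Rightarrow> real \<Rightarrow> real \<Rightarrow> real" where
  "theta_min \<alpha> p \<tau> \<beta> = 1/4 * min 1 (min (\<alpha>/p) (min (\<tau>/p) (\<beta>/p)))"

end

theory Submission
  imports Defs "HOL-Library.Quadratic_Discriminant"
begin

lemma theta_bar_pos:
  assumes "Lb > 0" "p > 0" "\<Gamma> > 0" "\<mu> \<ge> 0"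
  shows "theta_bar Lb \<mu> p \<Gamma> > 0"
proof -
  define a where "a = p * Lb * \<Gamma>"
  define b where "b = p * (Lb + \<Gamma> * \<mu>)"
  define c where "c = - (Lb + \<Gamma> * \<mu>)"
  have a: "a > 0" using assms by (simp add: a_def)
  have b: "b > 0" using assms by (simp add: b_def add_pos_nonneg)
  have "\<Gamma> * \<mu> \<ge> 0" using assms by simp
  hence c: "c < 0" using assms unfolding c_def by linarith
  have S: "{\<theta>. p * Lb * \<Gamma> * \<theta>\<^sup>2 + p * (Lb + \<Gamma> * \<mu>) * \<theta> - (Lb + \<Gamma> * \<mu>) = 0}
       = {\<theta>. a * \<theta>\<^sup>2 + b * \<theta> + c = 0}" unfolding a_def b_def c_def by (rule Collect_cong) linarith
  have D: "discrim a b c > b\<^sup>2" using a c by (simp add: discrim_def mult_pos_neg)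
  define r where "r = (- b + sqrt (discrim a b c)) / (2 * a)"
  have "sqrt (discrim a b c) > sqrt (b\<^sup>2)" using D by (simp only: real_sqrt_less_iff)
  hence "sqrt (discrim a b c) > b" using b by simp
  hence rpos: "r > 0" using a by (simp add: r_def)
  have rin: "a * r\<^sup>2 + b * r + c = 0"
    using discriminant_iff[of a r b c] a D unfolding r_def
    by (smt (verit) zero_le_power2)
  have fin: "finite {\<theta>. a * \<theta>\<^sup>2 + b * \<theta> + c = 0}"
  proof (rule finite_subset)
    show "{\<theta>. a * \<theta>\<^sup>2 + b * \<theta> + c = 0} \<subseteq> {(- b + sqrt (discrim a b c)) / (2 * a), (- b - sqrt (discrim a b c)) / (2 * a)}"
      using discriminant_iff[of a _ b c] a by auto
  qed simp
  have "r \<le> Max {\<theta>. a * \<theta>\<^sup>2 + b * \<theta> + c = 0}"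
    using fin rin by (intro Max_ge) auto
  thus ?thesis unfolding theta_bar_def S using rpos by linarith
qed

lemma line_deriv:
  fixes f :: "'a::real_inner \<Rightarrow> real"
  assumes "\<forall>x. (f has_derivative (\<lambda>v. G x \<bullet> v)) (at x)"
  shows "((\<lambda>t. f (x + t *\<^sub>R d)) has_real_derivative (G (x + t *\<^sub>R d) \<bullet> d)) (at t)"
proof -
  have l: "((\<lambda>t. x + t *\<^sub>R d) has_derivative (\<lambda>s. s *\<^sub>R d)) (at t)"
    by (auto intro!: derivative_eq_intros)
  have "((\<lambda>t. f (x + t *\<^sub>R d)) has_derivative (\<lambda>s. G (x + t *\<^sub>R d) \<bullet> (s *\<^sub>R d))) (at t)"
    using has_derivative_compose[OF l assms[rule_format, of "x + t *\<^sub>R d"]] by (simp add: o_def)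
  moreover have "(\<lambda>s. G (x + t *\<^sub>R d) \<bullet> (s *\<^sub>R d)) = (*) (G (x + t *\<^sub>R d) \<bullet> d)"
    by (auto simp: mult.commute)
  ultimately show ?thesis by (simp add: has_field_derivative_def)
qed

lemma first_order_convex:
  fixes f :: "'a::real_inner \<Rightarrow> real"
  assumes cv: "convex_on UNIV f" and d: "\<forall>x. (f has_derivative (\<lambda>v. G x \<bullet> v)) (at x)"
  shows "f y \<ge> f x + G x \<bullet> (y - x)"
proof -
  let ?g = "\<lambda>t::real. f (x + t *\<^sub>R (y - x))"
  have cg: "convex_on UNIV ?g"
  proof (rule convex_onI)
    fix t a b :: real assume "t > 0" "t < 1"
    have "x + ((1 - t) *\<^sub>R a + t *\<^sub>R b) *\<^sub>R (y - x) = (1 - t) *\<^sub>R (x + a *\<^sub>R (y - x)) + t *\<^sub>R (x + b *\<^sub>R (y - x))"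
      by (simp add: algebra_simps)
    thus "?g ((1 - t) *\<^sub>R a + t *\<^sub>R b) \<le> (1 - t) * ?g a + t * ?g b"
      using convex_onD[OF cv, of t] \<open>t > 0\<close> \<open>t < 1\<close> by simp
  qed simp
  have "?g 1 - ?g 0 \<ge> (G (x + 0 *\<^sub>R (y - x)) \<bullet> (y - x)) * (1 - 0)"
  proof (rule convex_on_imp_above_tangent[OF cg])
    show "((\<lambda>t. f (x + t *\<^sub>R (y - x))) has_real_derivative G (x + 0 *\<^sub>R (y - x)) \<bullet> (y - x)) (at 0 within UNIV)"
      by (rule line_deriv[OF d])
  qed auto
  thus ?thesis by simp
qed

lemma descent:
  fixes f :: "'a::real_inner \<Rightarrow> real"
  assumes d: "\<forall>x. (f has_derivative (\<lambda>v. G x \<bullet> v)) (at x)"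
    and lip: "\<forall>x y. norm (G x - G y) \<le> L * norm (x - y)"
  shows "f (x + h) \<le> f x + G x \<bullet> h + L / 2 * (norm h)\<^sup>2"
proof -
  let ?p = "\<lambda>t. f (x + t *\<^sub>R h) - t * (G x \<bullet> h) - L / 2 * t\<^sup>2 * (norm h)\<^sup>2"
  have "?p 0 \<ge> ?p 1"
  proof (rule DERIV_nonpos_imp_nonincreasing[where f="?p"])
    fix t :: real assume t: "0 \<le> t" "t \<le> 1"
    have D1: "(?p has_real_derivative (G (x + t *\<^sub>R h) \<bullet> h - G x \<bullet> h - L / 2 * (2 * t) * (norm h)\<^sup>2)) (at t)"
    proof -
      have a1: "((\<lambda>t. f (x + t *\<^sub>R h)) has_real_derivative (G (x + t *\<^sub>R h) \<bullet> h)) (at t)"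
        by (rule line_deriv[OF d])
      have a2: "((\<lambda>t. t * (G x \<bullet> h)) has_real_derivative (G x \<bullet> h)) (at t)"
        using DERIV_cmult_right[OF DERIV_ident, of "G x \<bullet> h"] by simp
      have a3: "((\<lambda>t. L / 2 * t\<^sup>2 * (norm h)\<^sup>2) has_real_derivative (L / 2 * (2 * t) * (norm h)\<^sup>2)) (at t)"
        by (auto intro!: derivative_eq_intros)
      show ?thesis using DERIV_diff[OF DERIV_diff[OF a1 a2] a3] by simp
    qed
    have D2: "G (x + t *\<^sub>R h) \<bullet> h - G x \<bullet> h - L / 2 * (2 * t) * (norm h)\<^sup>2 \<le> 0"
    proof -
      have "G (x + t *\<^sub>R h) \<bullet> h - G x \<bullet> h = (G (x + t *\<^sub>R h) - G x) \<bullet> h" by (simp add: inner_diff_left)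
      also have "\<dots> \<le> norm (G (x + t *\<^sub>R h) - G x) * norm h" by (rule norm_cauchy_schwarz)
      also have "\<dots> \<le> (L * norm (t *\<^sub>R h)) * norm h"
        using lip[rule_format, of "x + t *\<^sub>R h" x] by (intro mult_right_mono) auto
      also have "\<dots> = L * t * (norm h)\<^sup>2" using t by (simp add: power2_eq_square)
      finally show ?thesis by simp
    qed
    show "\<exists>y. DERIV ?p t :> y \<and> y \<le> 0" by (intro exI conjI, rule D1, rule D2)
  qed simp
  thus ?thesis by simp
qed

lemma norm_add_sq: "(norm (a + d))\<^sup>2 = (norm a)\<^sup>2 + 2 * (a \<bullet> d) + (norm (d::'a::real_inner))\<^sup>2"
  by (simp add: power2_norm_eq_inner inner_add algebra_simps inner_commute)

lemma cocoercive:
  fixes f :: "'a::real_inner \<Rightarrow> real"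
  assumes cv: "convex_on UNIV f" and d: "\<forall>x. (f has_derivative (\<lambda>v. G x \<bullet> v)) (at x)"
    and lip: "\<forall>x y. norm (G x - G y) \<le> L * norm (x - y)" and L: "L \<ge> 0"
  shows "(norm (G x - G y))\<^sup>2 \<le> 2 * L * (f x - f y - G y \<bullet> (x - y))"
proof (cases "L = 0")
  case True
  hence "norm (G x - G y) \<le> 0" using lip by auto
  hence "G x - G y = 0" by simp
  thus ?thesis using True by simp
next
  case False
  hence Lp: "L > 0" using L by simp
  define g where "g = G x - G y"
  define h where "h = (- 1 / L) *\<^sub>R g"
  have 1: "f (x + h) \<ge> f y + G y \<bullet> (x + h - y)" by (rule first_order_convex[OF cv d])
  have 2: "f (x + h) \<le> f x + G x \<bullet> h + L / 2 * (norm h)\<^sup>2" by (rule descent[OF d lip])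
  have nh: "(norm h)\<^sup>2 = (norm g)\<^sup>2 / L\<^sup>2" using Lp by (simp add: h_def power_divide)
  have "G x \<bullet> h - G y \<bullet> h = - (1 / L) * (g \<bullet> g)" by (simp add: h_def g_def inner_diff_left diff_divide_distrib)
  also have "g \<bullet> g = (norm g)\<^sup>2" by (simp add: power2_norm_eq_inner)
  finally have 3: "G x \<bullet> h - G y \<bullet> h = - (norm g)\<^sup>2 / L" by simp
  have d4: "G y \<bullet> (x + h - y) = G y \<bullet> (x - y) + G y \<bullet> h" by (simp add: inner_add_right inner_diff_right)
  have d2: "f (x + h) \<le> f x + G x \<bullet> h + L / 2 * ((norm g)\<^sup>2 / L\<^sup>2)" using 2 unfolding nh .
  with 1 3 d2 d4 have "(norm g)\<^sup>2 / L - L / 2 * ((norm g)\<^sup>2 / L\<^sup>2) \<le> f x - f y - G y \<bullet> (x - y)" by linarith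
  moreover have "(norm g)\<^sup>2 / L - L / 2 * ((norm g)\<^sup>2 / L\<^sup>2) = (norm g)\<^sup>2 / (2 * L)"
    using Lp by (simp add: field_simps power2_eq_square)
  ultimately have "(norm g)\<^sup>2 / (2 * L) \<le> f x - f y - G y \<bullet> (x - y)" by simp
  thus ?thesis using Lp unfolding g_def by (simp add: field_simps)
qed

lemma aux:
  fixes A A0 B B0 P Q N gd gx c \<mu> :: real
  shows "A = A0 + 2*P + N \<Longrightarrow> B = B0 + 2*Q + N \<Longrightarrow> gd + 2*c*P + \<mu>*Q = 0 \<Longrightarrow>
    gx + gd + c*A + \<mu>/2*B = gx + c*A0 + \<mu>/2*B0 + (c + \<mu>/2)*N"
  by (simp add: algebra_simps)

lemma argmin_closed:
  fixes g u y :: "'a::real_inner"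
  assumes c: "c > 0" and mu: "\<mu> \<ge> 0"
  shows "(ARG_MIN (\<lambda>x. g \<bullet> x + c * (norm (x - u))\<^sup>2 + \<mu> / 2 * (norm (x - y))\<^sup>2) x. True)
         = (1 / (2 * c + \<mu>)) *\<^sub>R ((2 * c) *\<^sub>R u + \<mu> *\<^sub>R y - g)"
proof -
  define obj where "obj = (\<lambda>x. g \<bullet> x + c * (norm (x - u))\<^sup>2 + \<mu> / 2 * (norm (x - y))\<^sup>2)"
  define x0 where "x0 = (1 / (2 * c + \<mu>)) *\<^sub>R ((2 * c) *\<^sub>R u + \<mu> *\<^sub>R y - g)"
  have pos: "2 * c + \<mu> > 0" using c mu by simp
  have "(2 * c + \<mu>) *\<^sub>R x0 = (2 * c) *\<^sub>R u + \<mu> *\<^sub>R y - g" using pos by (simp add: x0_def)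
  hence e: "g + (2 * c) *\<^sub>R (x0 - u) + \<mu> *\<^sub>R (x0 - y) = 0"
    by (simp add: algebra_simps scaleR_add_left)
  have key: "obj (x0 + d) = obj x0 + (c + \<mu> / 2) * (norm d)\<^sup>2" for d
  proof -
    have a: "(norm (x0 + d - u))\<^sup>2 = (norm (x0 - u))\<^sup>2 + 2 * ((x0 - u) \<bullet> d) + (norm d)\<^sup>2"
      using norm_add_sq[of "x0 - u" d] by (simp add: algebra_simps)
    have b: "(norm (x0 + d - y))\<^sup>2 = (norm (x0 - y))\<^sup>2 + 2 * ((x0 - y) \<bullet> d) + (norm d)\<^sup>2"
      using norm_add_sq[of "x0 - y" d] by (simp add: algebra_simps)
    have "(g + (2 * c) *\<^sub>R (x0 - u) + \<mu> *\<^sub>R (x0 - y)) \<bullet> d = 0" using e by simp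
    hence l: "g \<bullet> d + 2 * c * ((x0 - u) \<bullet> d) + \<mu> * ((x0 - y) \<bullet> d) = 0"
      by (simp add: inner_add_left)
    have o1: "obj (x0 + d) = g \<bullet> x0 + g \<bullet> d + c * (norm (x0 + d - u))\<^sup>2 + \<mu> / 2 * (norm (x0 + d - y))\<^sup>2"
      unfolding obj_def by (simp only: inner_add_right)
    have o2: "obj x0 = g \<bullet> x0 + c * (norm (x0 - u))\<^sup>2 + \<mu> / 2 * (norm (x0 - y))\<^sup>2"
      unfolding obj_def by simp
    show ?thesis unfolding o1 o2 by (rule aux[OF a b l])
  qed
  have strict: "obj x0 < obj x" if "x \<noteq> x0" for x
  proof -
    have "norm (x - x0) > 0" using that by simp
    hence "(c + \<mu> / 2) * (norm (x - x0))\<^sup>2 > 0" using c mu by (simp add: add_pos_nonneg)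
    thus ?thesis using key[of "x - x0"] by simp
  qed
  have "arg_min obj (\<lambda>x. True) = x0"
    unfolding arg_min_def
  proof (rule some_equality)
    show "is_arg_min obj (\<lambda>x. True) x0" unfolding is_arg_min_def using strict
      by (metis less_asym)
    show "x = x0" if "is_arg_min obj (\<lambda>x. True) x" for x
      using that strict unfolding is_arg_min_def by blast
  qed
  thus ?thesis unfolding obj_def x0_def .
qed

lemma borel_component:
  assumes "\<forall>i. sets (M i) = sets borel" "i \<in> K"
  shows "(\<lambda>x. x i) \<in> borel_measurable (PiM K M)"
  using measurable_component_singleton[OF assms(2), of M] measurable_cong_sets[of _ _ "M i" borel] assms(1)
  by auto

lemma one_var:
  fixes M :: "'a::euclidean_space measure"
  assumes ps: "prob_space M" and sM: "sets M = sets borel" and int: "integrable M (\<lambda>y. y)"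
    and mean: "(\<integral>y. y \<partial>M) = e"
    and var: "(\<integral>\<^sup>+y. ennreal ((norm (y - e))\<^sup>2) \<partial>M) \<le> ennreal \<sigma>" and sig: "\<sigma> \<ge> 0"
  shows "(\<integral>\<^sup>+y. ennreal ((norm (a + c *\<^sub>R (y - e)))\<^sup>2) \<partial>M) \<le> ennreal ((norm a)\<^sup>2 + c\<^sup>2 * \<sigma>)"
proof -
  interpret prob_space M by (rule ps)
  have "(\<lambda>y. (norm (y - e))\<^sup>2) \<in> borel_measurable borel" by measurable
  hence meas: "(\<lambda>y. (norm (y - e))\<^sup>2) \<in> borel_measurable M"
    by (simp add: measurable_cong_sets[OF sM refl])
  have iv: "integrable M (\<lambda>y. (norm (y - e))\<^sup>2)"
    by (rule integrableI_nonneg[OF meas]) (use var in \<open>auto simp: top_unique intro: le_less_trans\<close>)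
  have eq: "(norm (a + c *\<^sub>R (y - e)))\<^sup>2 = (norm a)\<^sup>2 + 2 * c * (a \<bullet> y - a \<bullet> e) + c\<^sup>2 * (norm (y - e))\<^sup>2" for y
    using norm_add_sq[of a "c *\<^sub>R (y - e)"] by (simp add: inner_diff_right power_mult_distrib)
  have i2: "integrable M (\<lambda>y. (norm a)\<^sup>2 + 2 * c * (a \<bullet> y - a \<bullet> e) + c\<^sup>2 * (norm (y - e))\<^sup>2)"
    using int iv by auto
  have "(\<integral>\<^sup>+y. ennreal ((norm (a + c *\<^sub>R (y - e)))\<^sup>2) \<partial>M)
      = (\<integral>\<^sup>+y. ennreal ((norm a)\<^sup>2 + 2 * c * (a \<bullet> y - a \<bullet> e) + c\<^sup>2 * (norm (y - e))\<^sup>2) \<partial>M)"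
    by (simp only: eq)
  also have "\<dots> = ennreal (\<integral>y. (norm a)\<^sup>2 + 2 * c * (a \<bullet> y - a \<bullet> e) + c\<^sup>2 * (norm (y - e))\<^sup>2 \<partial>M)"
    by (rule nn_integral_eq_integral[OF i2]) (simp add: eq[symmetric])
  also have "(\<integral>y. (norm a)\<^sup>2 + 2 * c * (a \<bullet> y - a \<bullet> e) + c\<^sup>2 * (norm (y - e))\<^sup>2 \<partial>M)
      = (norm a)\<^sup>2 + c\<^sup>2 * (\<integral>y. (norm (y - e))\<^sup>2 \<partial>M)"
    using int iv mean by (simp add: prob_space)
  also have "(\<integral>y. (norm (y - e))\<^sup>2 \<partial>M) \<le> \<sigma>"
  proof -
    have "ennreal (\<integral>y. (norm (y - e))\<^sup>2 \<partial>M) = (\<integral>\<^sup>+y. ennreal ((norm (y - e))\<^sup>2) \<partial>M)"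
      by (rule nn_integral_eq_integral[OF iv, symmetric]) simp
    hence "ennreal (\<integral>y. (norm (y - e))\<^sup>2 \<partial>M) \<le> ennreal \<sigma>" using var by simp
    thus ?thesis using sig by simp
  qed
  hence "ennreal ((norm a)\<^sup>2 + c\<^sup>2 * (\<integral>y. (norm (y - e))\<^sup>2 \<partial>M)) \<le> ennreal ((norm a)\<^sup>2 + c\<^sup>2 * \<sigma>)"
    using sig by (intro ennreal_leI add_left_mono mult_left_mono) auto
  finally show ?thesis .
qed

lemma meas_sumfun:
  fixes M :: "nat \<Rightarrow> 'a::euclidean_space measure"
  assumes sb: "\<forall>i. sets (M i) = sets borel"
  shows "(\<lambda>m. ennreal ((norm (v + c *\<^sub>R (\<Sum>i\<in>K. m i - e i)))\<^sup>2)) \<in> borel_measurable (PiM K M)"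
proof -
  have s: "(\<lambda>m. \<Sum>i\<in>K. m i - e i) \<in> borel_measurable (PiM K M)"
    by (intro borel_measurable_sum borel_measurable_diff borel_component[OF sb]) auto
  have g: "(\<lambda>s. ennreal ((norm (v + c *\<^sub>R s))\<^sup>2)) \<in> borel_measurable borel" by measurable
  show ?thesis using measurable_compose[OF s g] by (simp add: o_def)
qed

lemma prod_var:
  fixes M :: "nat \<Rightarrow> 'a::euclidean_space measure" and e :: "nat \<Rightarrow> 'a" and \<sigma> :: "nat \<Rightarrow> real"
  assumes H: "\<forall>i. prob_space (M i) \<and> sets (M i) = sets borel \<and> integrable (M i) (\<lambda>y. y) \<and>
      (\<integral>y. y \<partial>M i) = e i \<and> (\<integral>\<^sup>+y. ennreal ((norm (y - e i))\<^sup>2) \<partial>M i) \<le> ennreal (\<sigma> i) \<and> \<sigma> i \<ge> 0"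
    and fin: "finite I"
  shows "(\<integral>\<^sup>+m. ennreal ((norm (v + c *\<^sub>R (\<Sum>i\<in>I. m i - e i)))\<^sup>2) \<partial>PiM I M)
           \<le> ennreal ((norm v)\<^sup>2 + c\<^sup>2 * (\<Sum>i\<in>I. \<sigma> i))"
  using fin
proof (induction I rule: finite_induct)
  case empty
  interpret prob_space "PiM {} M" by (rule prob_space_PiM) (use H in auto)
  show ?case by (simp add: emeasure_space_1)
next
  case (insert j I)
  have sb: "\<forall>i. sets (M i) = sets borel" using H by auto
  have pM: "\<And>i. prob_space (M i)" using H by blast
  interpret product_sigma_finite M
    unfolding product_sigma_finite_def using pM prob_space_imp_sigma_finite by blast
  interpret PI: prob_space "PiM I M" by (rule prob_space_PiM) (rule pM)
  define a where "a = (\<lambda>x. v + c *\<^sub>R (\<Sum>i\<in>I. x i - e i))"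
  note Hj = H[rule_format, of j]
  have sge: "\<forall>i. \<sigma> i \<ge> 0" using H by blast
  have sig: "\<sigma> j \<ge> 0" using sge by blast
  have "(\<integral>\<^sup>+m. ennreal ((norm (v + c *\<^sub>R (\<Sum>i\<in>insert j I. m i - e i)))\<^sup>2) \<partial>PiM (insert j I) M)
      = (\<integral>\<^sup>+x. (\<integral>\<^sup>+y. ennreal ((norm (v + c *\<^sub>R (\<Sum>i\<in>insert j I. (x(j := y)) i - e i)))\<^sup>2) \<partial>M j) \<partial>PiM I M)"
    by (rule product_nn_integral_insert[OF insert(1,2) meas_sumfun[OF sb]])
  also have "\<dots> = (\<integral>\<^sup>+x. (\<integral>\<^sup>+y. ennreal ((norm (a x + c *\<^sub>R (y - e j)))\<^sup>2) \<partial>M j) \<partial>PiM I M)"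
  proof -
    have sumeq: "(\<Sum>i\<in>insert j I. (x(j := y)) i - e i) = (y - e j) + (\<Sum>i\<in>I. x i - e i)" for x y
    proof -
      have "(\<Sum>i\<in>I. (x(j := y)) i - e i) = (\<Sum>i\<in>I. x i - e i)"
        using insert(2) by (intro sum.cong) auto
      thus ?thesis using insert(1,2) by simp
    qed
    have eqv: "v + c *\<^sub>R (\<Sum>i\<in>insert j I. (x(j := y)) i - e i) = a x + c *\<^sub>R (y - e j)" for x y
      unfolding sumeq a_def by (simp add: scaleR_add_right add_ac)
    show ?thesis by (simp only: eqv)
  qed
  also have "\<dots> \<le> (\<integral>\<^sup>+x. ennreal ((norm (a x))\<^sup>2 + c\<^sup>2 * \<sigma> j) \<partial>PiM I M)"
    apply (rule nn_integral_mono)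
    apply (rule one_var)
    using Hj by auto
  also have "\<dots> = (\<integral>\<^sup>+x. ennreal ((norm (a x))\<^sup>2) + ennreal (c\<^sup>2 * \<sigma> j) \<partial>PiM I M)"
    using sig by (intro nn_integral_cong) (simp add: ennreal_plus)
  also have "\<dots> = (\<integral>\<^sup>+x. ennreal ((norm (a x))\<^sup>2) \<partial>PiM I M) + ennreal (c\<^sup>2 * \<sigma> j)"
    using meas_sumfun[OF sb, of v c e I] unfolding a_def
    by (subst nn_integral_add) (auto simp: PI.emeasure_space_1)
  also have "\<dots> \<le> ennreal ((norm v)\<^sup>2 + c\<^sup>2 * (\<Sum>i\<in>I. \<sigma> i)) + ennreal (c\<^sup>2 * \<sigma> j)"
    using insert(3) unfolding a_def by (rule add_right_mono)
  also have "\<dots> = ennreal ((norm v)\<^sup>2 + c\<^sup>2 * (\<Sum>i\<in>insert j I. \<sigma> i))"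
  proof -
    have s0: "(\<Sum>i\<in>I. \<sigma> i) \<ge> 0" using sge by (simp add: sum_nonneg)
    have "ennreal ((norm v)\<^sup>2 + c\<^sup>2 * (\<Sum>i\<in>I. \<sigma> i)) + ennreal (c\<^sup>2 * \<sigma> j)
        = ennreal ((norm v)\<^sup>2 + c\<^sup>2 * (\<Sum>i\<in>I. \<sigma> i) + c\<^sup>2 * \<sigma> j)"
      by (rule ennreal_plus[symmetric]) (use s0 sig in auto)
    also have "(norm v)\<^sup>2 + c\<^sup>2 * (\<Sum>i\<in>I. \<sigma> i) + c\<^sup>2 * \<sigma> j = (norm v)\<^sup>2 + c\<^sup>2 * (\<Sum>i\<in>insert j I. \<sigma> i)"
      using insert(1,2) by (simp add: algebra_simps)
    finally show ?thesis .
  qed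
  finally show ?case .
qed

lemma young_sq:
  fixes P Q :: "'a::real_inner"
  assumes t: "t > 0"
  shows "(norm (P + Q))\<^sup>2 \<le> (1 + t) * (norm P)\<^sup>2 + (1 + 1 / t) * (norm Q)\<^sup>2"
proof -
  have cs: "P \<bullet> Q \<le> norm P * norm Q" by (rule norm_cauchy_schwarz)
  have e1: "(t * norm P - norm Q)\<^sup>2 / t = t * (norm P)\<^sup>2 + (norm Q)\<^sup>2 / t - 2 * (norm P * norm Q)"
    using t by (simp add: field_simps power2_eq_square)
  have "(t * norm P - norm Q)\<^sup>2 / t \<ge> 0" using t by simp
  hence "2 * (norm P * norm Q) \<le> t * (norm P)\<^sup>2 + (norm Q)\<^sup>2 / t" using e1 by linarith
  moreover have "(norm (P + Q))\<^sup>2 = (norm P)\<^sup>2 + 2 * (P \<bullet> Q) + (norm Q)\<^sup>2" by (rule norm_add_sq)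
  ultimately show ?thesis using cs by (simp add: algebra_simps)
qed

lemma convex_on_sum_fun:
  assumes "finite I" "\<forall>i\<in>I. convex_on S (f i)" "convex S"
  shows "convex_on S (\<lambda>x. \<Sum>i\<in>I. f i x)"
  using assms
proof (induction I rule: finite_induct)
  case empty
  then show ?case by (simp add: convex_on_const)
next
  case (insert j I)
  then show ?case by (simp add: convex_on_add)
qed

lemma lip_nonneg:
  fixes G :: "'a::euclidean_space \<Rightarrow> 'b::real_normed_vector"
  assumes "\<forall>x y. norm (G x - G y) \<le> L * norm (x - y)"
  shows "L \<ge> 0"
proof -
  obtain b :: 'a where b: "b \<in> Basis" using nonempty_Basis by blast
  hence nb: "norm b > 0" using nonzero_Basis by auto
  have "0 \<le> L * norm (b - 0)" using assms[rule_format, of b 0] norm_ge_zero order_trans by blast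
  hence "0 \<le> L * norm b" by simp
  thus ?thesis using nb by (simp add: zero_le_mult_iff)
qed

theorem lemma8:
  fixes n :: nat
    and f :: "nat \<Rightarrow> 'a::euclidean_space \<Rightarrow> real"
    and gf :: "nat \<Rightarrow> 'a \<Rightarrow> 'a"
    and Li :: "nat \<Rightarrow> real" and Lhat L \<mu> :: real
    and \<omega> \<alpha> Lb p \<tau> \<Gamma> :: real
    and CDy CDz :: "nat \<Rightarrow> 'a \<Rightarrow> 'a measure" and CP :: "'a \<Rightarrow> 'a measure"
    and w u z k :: 'a and h :: "nat \<Rightarrow> 'a"
    and F :: "'a \<Rightarrow> real" and GF :: "'a \<Rightarrow> 'a" and Lmax \<theta> \<gamma> \<Gamma>' s :: real
    and y' hbar q' :: 'a and g u' :: "(nat \<Rightarrow> 'a) \<Rightarrow> 'a"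
  assumes n_pos: "n \<ge> 1"
    \<comment> \<open>Assumption 1\<close>
    and grad: "\<forall>i<n. \<forall>x. (f i has_derivative (\<lambda>v. gf i x \<bullet> v)) (at x)"
    and smooth_i: "\<forall>i<n. \<forall>x y. norm (gf i x - gf i y) \<le> Li i * norm (x - y)"
    and Lhat_pos: "Lhat > 0"
    and Lhat: "\<forall>x y. (1 / real n) * (\<Sum>i<n. (norm (gf i x - gf i y))\<^sup>2) \<le> Lhat\<^sup>2 * (norm (x - y))\<^sup>2"
    \<comment> \<open>Assumption 2\<close>
    and smooth: "\<forall>x y. norm ((1 / real n) *\<^sub>R (\<Sum>i<n. gf i x) - (1 / real n) *\<^sub>R (\<Sum>i<n. gf i y))
                        \<le> L * norm (x - y)"
    \<comment> \<open>Assumption 3\<close>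
    and cvx: "\<forall>i<n. convex_on UNIV (f i)"
    and mu_nonneg: "\<mu> \<ge> 0"
    and strong: "strongly_convex \<mu> (\<lambda>x. (1 / real n) * (\<Sum>i<n. f i x))"
    and minimizer: "\<exists>xs. \<forall>x. (1 / real n) * (\<Sum>i<n. f i xs) \<le> (1 / real n) * (\<Sum>i<n. f i x)"
    \<comment> \<open>compressors (Assumption 4 is built into the product/kernel structure below)\<close>
    and CDy: "\<forall>i<n. unbiased_compressor \<omega> (CDy i)"
    and CDz: "\<forall>i<n. unbiased_compressor \<omega> (CDz i)"
    and CP: "contractive_compressor \<alpha> CP"
    \<comment> \<open>parameters and current state\<close>
    and Lb_pos: "Lb > 0"
    and p: "0 < p" "p \<le> 1"
    and tau: "0 < \<tau>" "\<tau> \<le> 1"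
    and Gamma: "\<Gamma> \<ge> 1"
    \<comment> \<open>quantities computed by Algorithm 2Direction at step t\<close>
    and F_def: "F = (\<lambda>x. (1 / real n) * (\<Sum>i<n. f i x))"
    and GF_def: "GF = (\<lambda>x. (1 / real n) *\<^sub>R (\<Sum>i<n. gf i x))"
    and Lmax_def: "Lmax = Max (Li ` {..<n})"
    and theta_def: "\<theta> = min (theta_bar Lb \<mu> p \<Gamma>) (theta_min \<alpha> p \<tau> (1 / (\<omega> + 1)))"
    and gamma_def: "\<gamma> = p * \<theta> * \<Gamma> / (1 - p * \<theta>)"
    and Gamma'_def: "\<Gamma>' = \<Gamma> + \<gamma>"
    and s_def: "s = \<gamma> / (Lb + \<Gamma>' * \<mu>)"
    and y'_def: "y' = \<theta> *\<^sub>R w + (1 - \<theta>) *\<^sub>R z"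
    and hbar_def: "hbar = (1 / real n) *\<^sub>R (\<Sum>i<n. h i)"
    and g_def: "g = (\<lambda>m. hbar + (1 / real n) *\<^sub>R (\<Sum>i<n. m i))"
    and u'_def: "u' = (\<lambda>m. ARG_MIN (\<lambda>x. g m \<bullet> x + (Lb + \<Gamma> * \<mu>) / (2 * \<gamma>) * (norm (x - u))\<^sup>2
                               + \<mu> / 2 * (norm (x - y'))\<^sup>2) x. True)"
    and q'_def: "q' = (ARG_MIN (\<lambda>x. k \<bullet> x + (Lb + \<Gamma> * \<mu>) / (2 * \<gamma>) * (norm (x - w))\<^sup>2
                               + \<mu> / 2 * (norm (x - y'))\<^sup>2) x. True)"
  shows "(\<integral>\<^sup>+m. (\<integral>\<^sup>+c. ennreal ((norm ((q' + c) - u' m))\<^sup>2) \<partial>CP (u' m - q'))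
             \<partial>(PiM {..<n} (\<lambda>i. CDy i (gf i y' - h i))))
         \<le> ennreal ((1 - \<alpha> / 2) * (norm (w - u))\<^sup>2
                    + 4 / \<alpha> * s\<^sup>2 * (norm (k - GF z))\<^sup>2
                    + 2 * \<omega> / real n * s\<^sup>2 * ((1 / real n) * (\<Sum>i<n. (norm (gf i z - h i))\<^sup>2))
                    + s\<^sup>2 * (4 * \<omega> * Lmax / real n + 8 * L / \<alpha>) * bregman F GF z y')"
proof -
  have n0: "0 < n" using n_pos by simp
  have nR: "real n > 0" using n0 by simp
  have CD0: "unbiased_compressor \<omega> (CDy 0)" using CDy n0 by blast
  have om: "\<omega> \<ge> 0" using CD0 unfolding unbiased_compressor_def by blast
  have al: "0 < \<alpha>" "\<alpha> \<le> 1" using CP unfolding contractive_compressor_def by auto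
  have CPx: "\<And>x. (\<integral>\<^sup>+y. ennreal ((norm (y - x))\<^sup>2) \<partial>CP x) \<le> ennreal ((1 - \<alpha>) * (norm x)\<^sup>2)"
    using CP unfolding contractive_compressor_def by blast
  have tb: "theta_bar Lb \<mu> p \<Gamma> > 0" by (rule theta_bar_pos) (use Lb_pos p Gamma mu_nonneg in auto)
  have tm: "theta_min \<alpha> p \<tau> (1 / (\<omega> + 1)) > 0" using al p tau om by (simp add: theta_min_def)
  have tm4: "theta_min \<alpha> p \<tau> (1 / (\<omega> + 1)) \<le> 1 / 4" by (simp add: theta_min_def)
  have th: "\<theta> > 0" "\<theta> \<le> 1 / 4" using tb tm tm4 theta_def by auto
  have pt1: "p * \<theta> \<le> 1 * \<theta>" using p th by (intro mult_right_mono) auto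
  have pth: "p * \<theta> \<le> 1 / 4" "p * \<theta> > 0" using pt1 th p by (linarith, simp)
  have gam: "\<gamma> > 0" unfolding gamma_def using pth Gamma p th by (intro divide_pos_pos mult_pos_pos) auto
  define K where "K = Lb + \<Gamma> * \<mu>"
  have "\<Gamma> * \<mu> \<ge> 0" using Gamma mu_nonneg by simp
  hence K: "K > 0" using Lb_pos unfolding K_def by linarith
  have gm: "\<gamma> * \<mu> \<ge> 0" using gam mu_nonneg by simp
  define cc where "cc = (Lb + \<Gamma> * \<mu>) / (2 * \<gamma>)"
  have cc: "cc > 0" using K gam unfolding cc_def K_def by simp
  have sK: "s = \<gamma> / (K + \<gamma> * \<mu>)" unfolding s_def Gamma'_def K_def by (simp add: algebra_simps)
  have spos: "s > 0" using sK gam K gm by simp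
  have inv: "1 / (2 * cc + \<mu>) = s"
    unfolding sK cc_def K_def using gam K gm by (simp add: field_simps K_def)
  define a where "a = s * (2 * cc)"
  have cK: "cc = K / (2 * \<gamma>)" by (simp add: cc_def K_def)
  have Kg: "K + \<gamma> * \<mu> > 0" using K gm by linarith
  have aK: "a = K / (K + \<gamma> * \<mu>)" unfolding a_def sK cK using gam Kg by (simp add: field_simps)
  have a0: "a \<ge> 0" "a \<le> 1" using aK K gm by auto
  have u'cl: "u' m = s *\<^sub>R ((2 * cc) *\<^sub>R u + \<mu> *\<^sub>R y' - g m)" for m
    using argmin_closed[OF cc mu_nonneg, of "g m" u y'] unfolding u'_def cc_def inv[unfolded cc_def] .
  have q'cl: "q' = s *\<^sub>R ((2 * cc) *\<^sub>R w + \<mu> *\<^sub>R y' - k)"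
    using argmin_closed[OF cc mu_nonneg, of k w y'] unfolding q'_def cc_def inv[unfolded cc_def] .
  have diff: "u' m - q' = a *\<^sub>R (u - w) - s *\<^sub>R (g m - k)" for m
    unfolding u'cl q'cl a_def by (simp add: algebra_simps)
  define e where "e = (\<lambda>i. gf i y' - h i)"
  have gsum: "g m = GF y' + (1 / real n) *\<^sub>R (\<Sum>i<n. m i - e i)" for m
    unfolding g_def hbar_def GF_def e_def by (simp add: sum_subtractf scaleR_diff_right algebra_simps sum.distrib scaleR_add_right)
  define v1 where "v1 = a *\<^sub>R (u - w) - s *\<^sub>R (GF y' - k)"
  have diff2: "u' m - q' = v1 + (- (s / real n)) *\<^sub>R (\<Sum>i<n. m i - e i)" for m
    unfolding diff gsum v1_def by (simp add: algebra_simps)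
  have st1: "(\<integral>\<^sup>+m. (\<integral>\<^sup>+c. ennreal ((norm ((q' + c) - u' m))\<^sup>2) \<partial>CP (u' m - q'))
             \<partial>(PiM {..<n} (\<lambda>i. CDy i (gf i y' - h i))))
     \<le> (\<integral>\<^sup>+m. ennreal ((1 - \<alpha>) * (norm (u' m - q'))\<^sup>2) \<partial>(PiM {..<n} (\<lambda>i. CDy i (gf i y' - h i))))"
  proof (rule nn_integral_mono)
    fix m
    have eqc: "\<And>c. (q' + c) - u' m = c - (u' m - q')" by (simp add: algebra_simps)
    hence "(\<integral>\<^sup>+c. ennreal ((norm ((q' + c) - u' m))\<^sup>2) \<partial>CP (u' m - q'))
        = (\<integral>\<^sup>+c. ennreal ((norm (c - (u' m - q')))\<^sup>2) \<partial>CP (u' m - q'))" by (simp only: eqc)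
    also have "\<dots> \<le> ennreal ((1 - \<alpha>) * (norm (u' m - q'))\<^sup>2)" by (rule CPx)
    finally show "(\<integral>\<^sup>+c. ennreal ((norm ((q' + c) - u' m))\<^sup>2) \<partial>CP (u' m - q'))
        \<le> ennreal ((1 - \<alpha>) * (norm (u' m - q'))\<^sup>2)" .
  qed
  define idx where "idx = (\<lambda>i::nat. if i < n then i else 0)"
  have idx: "idx i < n" for i unfolding idx_def using n0 by auto
  define M' where "M' = (\<lambda>i. CDy (idx i) (e i))"
  define \<sigma> where "\<sigma> = (\<lambda>i. \<omega> * (norm (e i))\<^sup>2)"
  have H: "\<forall>i. prob_space (M' i) \<and> sets (M' i) = sets borel \<and> integrable (M' i) (\<lambda>y. y) \<and>
      (\<integral>y. y \<partial>M' i) = e i \<and> (\<integral>\<^sup>+y. ennreal ((norm (y - e i))\<^sup>2) \<partial>M' i) \<le> ennreal (\<sigma> i) \<and> \<sigma> i \<ge> 0"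
  proof
    fix i
    have "unbiased_compressor \<omega> (CDy (idx i))" using CDy idx by blast
    thus "prob_space (M' i) \<and> sets (M' i) = sets borel \<and> integrable (M' i) (\<lambda>y. y) \<and>
      (\<integral>y. y \<partial>M' i) = e i \<and> (\<integral>\<^sup>+y. ennreal ((norm (y - e i))\<^sup>2) \<partial>M' i) \<le> ennreal (\<sigma> i) \<and> \<sigma> i \<ge> 0"
      unfolding unbiased_compressor_def M'_def \<sigma>_def using om by auto
  qed
  have sb: "\<forall>i. sets (M' i) = sets borel" using H by blast
  have PM: "PiM {..<n} (\<lambda>i. CDy i (gf i y' - h i)) = PiM {..<n} M'"
    by (rule PiM_cong) (auto simp: M'_def idx_def e_def)
  have al1: "1 - \<alpha> \<ge> 0" using al by simp
  have "(\<integral>\<^sup>+m. ennreal ((1 - \<alpha>) * (norm (u' m - q'))\<^sup>2) \<partial>(PiM {..<n} (\<lambda>i. CDy i (gf i y' - h i))))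
      = (\<integral>\<^sup>+m. ennreal (1 - \<alpha>) * ennreal ((norm (v1 + (- (s / real n)) *\<^sub>R (\<Sum>i\<in>{..<n}. m i - e i)))\<^sup>2) \<partial>PiM {..<n} M')"
    unfolding PM diff2 using al1 by (simp add: ennreal_mult)
  also have "\<dots> = ennreal (1 - \<alpha>) * (\<integral>\<^sup>+m. ennreal ((norm (v1 + (- (s / real n)) *\<^sub>R (\<Sum>i\<in>{..<n}. m i - e i)))\<^sup>2) \<partial>PiM {..<n} M')"
    by (rule nn_integral_cmult) (rule meas_sumfun[OF sb])
  also have "\<dots> \<le> ennreal (1 - \<alpha>) * ennreal ((norm v1)\<^sup>2 + (- (s / real n))\<^sup>2 * (\<Sum>i\<in>{..<n}. \<sigma> i))"
    by (intro mult_left_mono prod_var[OF H]) auto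
  also have "\<dots> = ennreal ((1 - \<alpha>) * ((norm v1)\<^sup>2 + (s / real n)\<^sup>2 * (\<Sum>i<n. \<sigma> i)))"
  proof -
    have sg0: "(\<Sum>i<n. \<sigma> i) \<ge> 0" using om by (simp add: \<sigma>_def sum_nonneg)
    show ?thesis by (simp only: power2_minus) (rule ennreal_mult[symmetric], use al1 sg0 in auto)
  qed
  finally have st2: "(\<integral>\<^sup>+m. ennreal ((1 - \<alpha>) * (norm (u' m - q'))\<^sup>2) \<partial>(PiM {..<n} (\<lambda>i. CDy i (gf i y' - h i))))
      \<le> ennreal ((1 - \<alpha>) * ((norm v1)\<^sup>2 + (s / real n)\<^sup>2 * (\<Sum>i<n. \<sigma> i)))" .
  have real_ineq: "(1 - \<alpha>) * ((norm v1)\<^sup>2 + (s / real n)\<^sup>2 * (\<Sum>i<n. \<sigma> i))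
       \<le> (1 - \<alpha> / 2) * (norm (w - u))\<^sup>2
                    + 4 / \<alpha> * s\<^sup>2 * (norm (k - GF z))\<^sup>2
                    + 2 * \<omega> / real n * s\<^sup>2 * ((1 / real n) * (\<Sum>i<n. (norm (gf i z - h i))\<^sup>2))
                    + s\<^sup>2 * (4 * \<omega> * Lmax / real n + 8 * L / \<alpha>) * bregman F GF z y'"
  proof -
    define Di where "Di = (\<lambda>i. f i z - f i y' - gf i y' \<bullet> (z - y'))"
    define Dz where "Dz = bregman F GF z y'"
    define W where "W = (norm (w - u))\<^sup>2"
    define X where "X = (norm (GF y' - k))\<^sup>2"
    define KZ where "KZ = (norm (k - GF z))\<^sup>2"
    define Gs where "Gs = (\<Sum>i<n. (norm (gf i z - h i))\<^sup>2)"
    have DzS: "Dz = (1 / real n) * (\<Sum>i<n. Di i)"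
      unfolding Dz_def bregman_def F_def GF_def Di_def
      by (simp add: inner_sum_left sum_subtractf algebra_simps sum_distrib_left sum.distrib)
    have ei: "(norm (e i))\<^sup>2 \<le> 2 * (norm (gf i z - h i))\<^sup>2 + 4 * Lmax * Di i" if i: "i < n" for i
    proof -
      have gi: "\<forall>x. (f i has_derivative (\<lambda>v. gf i x \<bullet> v)) (at x)" using grad i by blast
      have ci: "convex_on UNIV (f i)" using cvx i by blast
      have li: "\<forall>x y. norm (gf i x - gf i y) \<le> Li i * norm (x - y)" using smooth_i i by blast
      have Li0: "Li i \<ge> 0" by (rule lip_nonneg[OF li])
      have Di0: "Di i \<ge> 0" using first_order_convex[OF ci gi, of y' z] unfolding Di_def by simp
      have coi: "(norm (gf i z - gf i y'))\<^sup>2 \<le> 2 * Li i * Di i"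
        using cocoercive[OF ci gi li Li0, of z y'] unfolding Di_def .
      have LiM: "Li i \<le> Lmax" unfolding Lmax_def using i by (intro Max_ge) auto
      have "e i = (gf i z - h i) + (gf i y' - gf i z)" unfolding e_def by simp
      hence "(norm (e i))\<^sup>2 \<le> (1 + 1) * (norm (gf i z - h i))\<^sup>2 + (1 + 1 / 1) * (norm (gf i y' - gf i z))\<^sup>2"
        using young_sq[of 1 "gf i z - h i" "gf i y' - gf i z"] by simp
      also have "(norm (gf i y' - gf i z))\<^sup>2 = (norm (gf i z - gf i y'))\<^sup>2" by (simp add: norm_minus_commute)
      also have "\<dots> \<le> 2 * Lmax * Di i"
        using coi LiM Di0 by (meson order_trans mult_right_mono mult_left_mono zero_le_numeral)
      finally show ?thesis by simp
    qed
    have sumE: "(\<Sum>i<n. (norm (e i))\<^sup>2) \<le> 2 * Gs + 4 * Lmax * (\<Sum>i<n. Di i)"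
    proof -
      have "(\<Sum>i<n. (norm (e i))\<^sup>2) \<le> (\<Sum>i<n. 2 * (norm (gf i z - h i))\<^sup>2 + 4 * Lmax * Di i)"
        by (rule sum_mono) (use ei in auto)
      also have "\<dots> = 2 * Gs + 4 * Lmax * (\<Sum>i<n. Di i)"
        unfolding Gs_def by (simp add: sum.distrib sum_distrib_left)
      finally show ?thesis .
    qed
    have P3: "(1 - \<alpha>) * ((s / real n)\<^sup>2 * (\<Sum>i<n. \<sigma> i))
        \<le> 2 * \<omega> / real n * s\<^sup>2 * ((1 / real n) * Gs) + 4 * \<omega> * Lmax / real n * s\<^sup>2 * Dz"
    proof -
      have ss: "(\<Sum>i<n. \<sigma> i) = \<omega> * (\<Sum>i<n. (norm (e i))\<^sup>2)" unfolding \<sigma>_def by (simp add: sum_distrib_left)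
      define T where "T = (s / real n)\<^sup>2 * (\<omega> * (\<Sum>i<n. (norm (e i))\<^sup>2))"
      have T0: "T \<ge> 0" unfolding T_def using om by (simp add: sum_nonneg)
      have "(1 - \<alpha>) * T \<le> T" using mult_nonneg_nonneg[of \<alpha> T] T0 al by (simp add: algebra_simps)
      also have "T \<le> (s / real n)\<^sup>2 * (\<omega> * (2 * Gs + 4 * Lmax * (\<Sum>i<n. Di i)))"
        unfolding T_def using sumE om by (intro mult_left_mono) auto
      also have "\<dots> = 2 * \<omega> / real n * s\<^sup>2 * ((1 / real n) * Gs) + 4 * \<omega> * Lmax / real n * s\<^sup>2 * Dz"
        unfolding DzS using nR by (simp add: field_simps power2_eq_square)
      finally show ?thesis unfolding ss T_def .
    qed
    have Fd: "\<forall>x. (F has_derivative (\<lambda>v. GF x \<bullet> v)) (at x)"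
    proof
      fix x
      have "((\<lambda>x. \<Sum>i<n. f i x) has_derivative (\<lambda>v. \<Sum>i<n. gf i x \<bullet> v)) (at x)"
        by (rule has_derivative_sum) (use grad in auto)
      hence "((\<lambda>x. (1 / real n) * (\<Sum>i<n. f i x)) has_derivative (\<lambda>v. (1 / real n) * (\<Sum>i<n. gf i x \<bullet> v))) (at x)"
        by (rule has_derivative_mult_right)
      moreover have "(\<lambda>v. (1 / real n) * (\<Sum>i<n. gf i x \<bullet> v)) = (\<lambda>v. GF x \<bullet> v)"
        unfolding GF_def by (simp add: inner_sum_left)
      ultimately show "(F has_derivative (\<lambda>v. GF x \<bullet> v)) (at x)" unfolding F_def by simp
    qed
    have Fc: "convex_on UNIV F"
      unfolding F_def using cvx by (intro convex_on_cmul convex_on_sum_fun) auto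
    have Fl: "\<forall>x y. norm (GF x - GF y) \<le> L * norm (x - y)" using smooth unfolding GF_def .
    have L0: "L \<ge> 0" by (rule lip_nonneg[OF Fl])
    have coF: "(norm (GF z - GF y'))\<^sup>2 \<le> 2 * L * Dz"
      using cocoercive[OF Fc Fd Fl L0, of z y'] unfolding Dz_def bregman_def .
    have P2: "X \<le> 2 * KZ + 4 * L * Dz"
    proof -
      have "GF y' - k = (GF z - k) + (GF y' - GF z)" by simp
      hence "X \<le> (1 + 1) * (norm (GF z - k))\<^sup>2 + (1 + 1 / 1) * (norm (GF y' - GF z))\<^sup>2"
        unfolding X_def using young_sq[of 1 "GF z - k" "GF y' - GF z"] by simp
      moreover have "(norm (GF z - k))\<^sup>2 = KZ" unfolding KZ_def by (simp add: norm_minus_commute)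
      moreover have "(norm (GF y' - GF z))\<^sup>2 = (norm (GF z - GF y'))\<^sup>2" by (simp add: norm_minus_commute)
      ultimately show ?thesis using coF by simp
    qed
    have P1: "(1 - \<alpha>) * (norm v1)\<^sup>2 \<le> (1 - \<alpha> / 2) * W + 2 / \<alpha> * s\<^sup>2 * X"
    proof -
      have "v1 = a *\<^sub>R (u - w) + (- (s *\<^sub>R (GF y' - k)))" unfolding v1_def by simp
      hence y1: "(norm v1)\<^sup>2 \<le> (1 + \<alpha> / 2) * (norm (a *\<^sub>R (u - w)))\<^sup>2 + (1 + 1 / (\<alpha> / 2)) * (norm (- (s *\<^sub>R (GF y' - k))))\<^sup>2"
        using young_sq[of "\<alpha> / 2" "a *\<^sub>R (u - w)" "- (s *\<^sub>R (GF y' - k))"] al by simp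
      have nP: "(norm (a *\<^sub>R (u - w)))\<^sup>2 = a\<^sup>2 * W"
        unfolding W_def by (simp add: power_mult_distrib norm_minus_commute)
      have nQ: "(norm (- (s *\<^sub>R (GF y' - k))))\<^sup>2 = s\<^sup>2 * X"
        unfolding X_def by (simp add: power_mult_distrib)
      define A1 where "A1 = (1 - \<alpha>) * (1 + \<alpha> / 2)"
      define A2 where "A2 = (1 - \<alpha>) * (1 + 1 / (\<alpha> / 2))"
      have W0: "W \<ge> 0" "X \<ge> 0" unfolding W_def X_def by auto
      have aa: "\<alpha> * \<alpha> \<le> 1 * \<alpha>" "\<alpha> * \<alpha> \<ge> 0" using al by (intro mult_right_mono, auto)
      have A1e: "A1 = 1 - \<alpha> / 2 - \<alpha> * \<alpha> / 2" unfolding A1_def by (simp add: field_simps)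
      have A10: "A1 \<ge> 0" "A1 \<le> 1 - \<alpha> / 2" unfolding A1e using aa al by linarith+
      have A2le: "A2 \<le> 2 / \<alpha>" unfolding A2_def using al by (simp add: field_simps)
      have a2: "a\<^sup>2 \<le> 1" using a0 by (simp add: power_le_one)
      have "(1 - \<alpha>) * (norm v1)\<^sup>2 \<le> (1 - \<alpha>) * ((1 + \<alpha> / 2) * (a\<^sup>2 * W) + (1 + 1 / (\<alpha> / 2)) * (s\<^sup>2 * X))"
        using y1 al1 unfolding nP nQ by (rule mult_left_mono)
      also have "\<dots> = A1 * (a\<^sup>2 * W) + A2 * (s\<^sup>2 * X)" unfolding A1_def A2_def by (simp add: algebra_simps)
      also have "A1 * (a\<^sup>2 * W) \<le> A1 * W"
        using A10 mult_right_mono[OF a2 W0(1)] by (intro mult_left_mono) auto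
      also have "A1 * W \<le> (1 - \<alpha> / 2) * W" using A10 W0 by (intro mult_right_mono) auto
      also have "A2 * (s\<^sup>2 * X) \<le> 2 / \<alpha> * (s\<^sup>2 * X)" using A2le W0 by (intro mult_right_mono) auto
      finally show ?thesis by (simp add: algebra_simps)
    qed
    have P2s: "2 / \<alpha> * s\<^sup>2 * X \<le> 4 / \<alpha> * s\<^sup>2 * KZ + 8 * L / \<alpha> * s\<^sup>2 * Dz"
    proof -
      have "2 / \<alpha> * s\<^sup>2 * X \<le> 2 / \<alpha> * s\<^sup>2 * (2 * KZ + 4 * L * Dz)"
        using P2 al by (intro mult_left_mono) auto
      thus ?thesis by (simp add: algebra_simps)
    qed
    have R: "s\<^sup>2 * (4 * \<omega> * Lmax / real n + 8 * L / \<alpha>) * Dz = 4 * \<omega> * Lmax / real n * s\<^sup>2 * Dz + 8 * L / \<alpha> * s\<^sup>2 * Dz"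
      by (simp add: algebra_simps)
    have "(1 - \<alpha>) * ((norm v1)\<^sup>2 + (s / real n)\<^sup>2 * (\<Sum>i<n. \<sigma> i))
        = (1 - \<alpha>) * (norm v1)\<^sup>2 + (1 - \<alpha>) * ((s / real n)\<^sup>2 * (\<Sum>i<n. \<sigma> i))" by (simp add: algebra_simps)
    thus ?thesis using P1 P2s P3 R unfolding W_def KZ_def Gs_def Dz_def by linarith
  qed
  show ?thesis
    using st1 st2 real_ineq by (meson order_trans ennreal_leI)
qed

end
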